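(* Let $p,q\ge 0$ be integers and let $\lambda=(p+1,1^{q})$ be the hook partition (first row of length $p+1$, followed by $q$ rows of length $1$). Let $z_{-q},\dots,z_{-1},z_0,z_1,\dots,z_p\in\mathbb{C}$ with $\Re(z_k)\ge 1$ for all $-q\le k\le p$, $\Re(z_p)>1$ and $\Re(z_{-q})>1$, and let ${\pmb s}\in T(\lambda,\mathbb{C})$ be the content-parametrized tableau with first row $z_0,z_1,\dots,z_p$ and first column $z_0,z_{-1},\dots,z_{-q}$ (i.e. $s_{1,j}=z_{j-1}$ for $1\le j\le p+1$ and $s_{i,1}=z_{-(i-1)}$ for $1\le i\le q+1$). Then $$\zeta_{\lambda}({\pmb s})=\sum_{j=0}^{q}(-1)^j\,\zeta^{\star}(z_{-j},\ldots,z_{-1},z_0,z_1,\ldots,z_p)\,\zeta(z_{-j-1},\ldots,z_{-q}),$$ where $\zeta(z_{-j-1},\ldots,z_{-q})$ is interpreted as $1$ when $j=q$.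
   Context: Euler–Zagier multiple zeta-function and its star variant: $\zeta(s_1,\ldots,s_r)=\sum_{0<m_1<\cdots<m_r}m_1^{-s_1}\cdots m_r^{-s_r}$ and $\zeta^{\star}(s_1,\ldots,s_r)=\sum_{0<m_1\le\cdots\le m_r}m_1^{-s_1}\cdots m_r^{-s_r}$. For a partition $\lambda$, $T(\lambda,X)$ denotes the set of fillings of the Young diagram of $\lambda$ by elements of $X$ (entry in row $i$, column $j$ denoted by the $(i,j)$ entry), and $\mathrm{SSYT}(\lambda)$ is the set of semi-standard Young tableaux $M=(m_{ij})\in T(\lambda,\mathbb{N})$, i.e. $m_{i1}\le m_{i2}\le\cdots$ along each row and $m_{1j}<m_{2j}<\cdots$ down each column. For ${\pmb s}=(s_{ij})\in T(\lambda,\mathbb{C})$ the Schur multiple zeta-function is $\zeta_\lambda({\pmb s})=\sum_{M\in\mathrm{SSYT}(\lambda)}\prod_{(i,j)\in\lambda}m_{ij}^{-s_{ij}}$ (absolutely convergent when $\Re(s_{ij})\ge1$ for all boxes and $\Re(s_{ij})>1$ at the corners of $\lambda$). The content of box $(i,j)$ is $j-i$; "content-parametrized" means $s_{ij}=z_{j-i}$. *)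

theory Defs
  imports "HOL-Analysis.Analysis"
begin

text \<open>Euler--Zagier multiple zeta value
  zeta(s_1,...,s_r) = sum over 0 < m_1 < ... < m_r of prod m_i^(-s_i).
  Index tuples are lists; the empty list gives value 1.\<close>
definition mzeta :: "complex list \<Rightarrow> complex" where
  "mzeta s = infsum (\<lambda>m. \<Prod>i<length s. (of_nat (m ! i)) powr (- (s ! i)))
     {m :: nat list. length m = length s \<and> sorted_wrt (<) m \<and> (\<forall>x\<in>set m. 0 < x)}"

definition mzeta_star :: "complex list \<Rightarrow> complex" where
  "mzeta_star s = infsum (\<lambda>m. \<Prod>i<length s. (of_nat (m ! i)) powr (- (s ! i)))
     {m :: nat list. length m = length s \<and> sorted_wrt (\<le>) m \<and> (\<forall>x\<in>set m. 0 < x)}"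

text \<open>A partition is given as the list of its row lengths (1-indexed rows/columns).
  Young diagram: boxes (i,j) with 1 \<le> i \<le> number of rows, 1 \<le> j \<le> length of row i.\<close>
definition young_diagram :: "nat list \<Rightarrow> (nat \<times> nat) set" where
  "young_diagram lam = {(i, j). 1 \<le> i \<and> i \<le> length lam \<and> 1 \<le> j \<and> j \<le> lam ! (i - 1)}"

text \<open>Semi-standard Young tableaux of shape lam with positive integer entries;
  fillings are represented as functions that vanish outside the diagram.\<close>
definition SSYT :: "nat list \<Rightarrow> (nat \<times> nat \<Rightarrow> nat) set" where
  "SSYT lam = {M. (\<forall>b. b \<notin> young_diagram lam \<longrightarrow> M b = 0)
     \<and> (\<forall>b\<in>young_diagram lam. 0 < M b)
     \<and> (\<forall>i j. (i, j) \<in> young_diagram lam \<and> (i, Suc j) \<in> young_diagram lam \<longrightarrow> M (i, j) \<le> M (i, Suc j))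
     \<and> (\<forall>i j. (i, j) \<in> young_diagram lam \<and> (Suc i, j) \<in> young_diagram lam \<longrightarrow> M (i, j) < M (Suc i, j))}"

definition schur_zeta :: "nat list \<Rightarrow> (nat \<times> nat \<Rightarrow> complex) \<Rightarrow> complex" where
  "schur_zeta lam s = infsum (\<lambda>M. \<Prod>b\<in>young_diagram lam. (of_nat (M b)) powr (- s b)) (SSYT lam)"

definition hook :: "nat \<Rightarrow> nat \<Rightarrow> nat list" where
  "hook p q = Suc p # replicate q 1"

end

theory Submission imports Defs begin

lemma prod_infsum_mult:
  fixes f :: "'a \<Rightarrow> 'c::{real_normed_field,banach}" and g :: "'b \<Rightarrow> 'c"
  assumes f: "(\<lambda>x. norm (f x)) summable_on A" and g: "(\<lambda>x. norm (g x)) summable_on B"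
  shows "(\<lambda>xy. norm (case xy of (x,y) \<Rightarrow> f x * g y)) summable_on A \<times> B"
    and "infsum f A * infsum g B = infsum (\<lambda>(x,y). f x * g y) (A \<times> B)"
proof -
  have "(\<lambda>xy. norm (f (fst xy) * g (snd xy))) summable_on Sigma A (\<lambda>_. B)"
  proof (subst Infinite_Sum.abs_summable_on_Sigma_iff, intro conjI ballI)
    fix x assume "x \<in> A"
    show "(\<lambda>y. norm (f (fst (x, y)) * g (snd (x, y)))) summable_on B"
      using summable_on_cmult_right[OF g, of "norm (f x)"] by (simp add: norm_mult)
  next
    have "(\<lambda>x. norm (f x) * infsum (\<lambda>y. norm (g y)) B) summable_on A"
      by (rule summable_on_cmult_left[OF f])
    then show "(\<lambda>x. norm (\<Sum>\<^sub>\<infinity>y\<in>B. norm (f (fst (x, y)) * g (snd (x, y))))) summable_on A"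
      by (simp add: norm_mult infsum_cmult_right' infsum_nonneg)
  qed
  then show 1: "(\<lambda>xy. norm (case xy of (x,y) \<Rightarrow> f x * g y)) summable_on A \<times> B"
    by (simp add: case_prod_beta)
  have s: "(\<lambda>(x,y). f x * g y) summable_on A \<times> B"
    proof -
    have e: "(\<lambda>(x,y). f x * g y) = (\<lambda>xy. f (fst xy) * g (snd xy))" by auto
    show ?thesis unfolding e using abs_summable_summable[OF 1] by (simp add: case_prod_beta)
  qed
  have "infsum (\<lambda>x. infsum (\<lambda>y. f x * g y) B) A = infsum (\<lambda>(x,y). f x * g y) (A \<times> B)"
    using infsum_Sigma'_banach[of "\<lambda>x y. f x * g y" A "\<lambda>_. B"] s by simp
  moreover have "infsum (\<lambda>x. infsum (\<lambda>y. f x * g y) B) A = infsum f A * infsum g B"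
    by (simp add: infsum_cmult_right' infsum_cmult_left')
  ultimately show "infsum f A * infsum g B = infsum (\<lambda>(x,y). f x * g y) (A \<times> B)" by simp
qed

definition PL :: "nat \<Rightarrow> nat list set" where
  "PL r = {m. length m = r \<and> (\<forall>x\<in>set m. 0 < x)}"

lemma dom_summable:
  fixes a :: real assumes "a > 1"
  shows "(\<lambda>m. prod_list (map (\<lambda>x. real x powr (-a)) m)) summable_on PL r"
proof (induction r)
  case 0
  have "PL 0 = {[]}" by (auto simp: PL_def)
  then show ?case by simp
next
  case (Suc r)
  have base: "(\<lambda>x. real x powr (-a)) summable_on {0<..}"
  proof -
    have "summable (\<lambda>n. real n powr (-a))"
      using assms by (subst summable_real_powr_iff) auto
    then have "(\<lambda>n. real n powr (-a)) summable_on UNIV"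
      by (rule summable_nonneg_imp_summable_on) auto
    then show ?thesis using summable_on_subset_banach by blast
  qed
  have ab: "\<And>m. \<bar>\<Prod>x\<leftarrow>m. real x powr - a\<bar> = (\<Prod>x\<leftarrow>m. real x powr - a)"
    by (rule abs_of_nonneg, rule prod_list_nonneg) auto
  have "(\<lambda>xl. norm (case xl of (x,l) \<Rightarrow> real x powr (-a) * prod_list (map (\<lambda>x. real x powr (-a)) l))) summable_on {0<..} \<times> PL r"
    apply (rule prod_infsum_mult(1))
    using base Suc ab by (auto simp: abs_mult prod_list_nonneg intro: summable_on_cong[THEN iffD1, rotated])
  then have s1: "(\<lambda>xl. case xl of (x,l) \<Rightarrow> real x powr (-a) * prod_list (map (\<lambda>x. real x powr (-a)) l)) summable_on {0<..} \<times> PL r"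
    using ab by (simp add: case_prod_unfold abs_mult)
  show ?case
  proof (subst summable_on_reindex_bij_witness[of "{0<..} \<times> PL r" "\<lambda>m. (hd m, tl m)" "\<lambda>(x,l). x # l", symmetric])
    show "(\<lambda>xl. case xl of (x,l) \<Rightarrow> real x powr (-a) * prod_list (map (\<lambda>x. real x powr (-a)) l)) summable_on {0<..} \<times> PL r"
      using s1 .
  qed (auto simp: PL_def length_Suc_conv)
qed

lemma key_ineq:
  fixes x e :: "nat \<Rightarrow> real" and d :: real
  assumes x1: "\<forall>i<Suc n. 1 \<le> x i" and xm: "\<forall>i<n. x i \<le> x n"
    and e1: "\<forall>i<Suc n. 1 \<le> e i" and d: "d = (e n - 1) / real (Suc n)" and en: "1 < e n"
  shows "(\<Prod>i<Suc n. x i powr (-e i)) \<le> (\<Prod>i<Suc n. x i powr (-(1+d)))"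
proof -
  have dpos: "d > 0" using d en by simp
  have xn: "1 \<le> x n" using x1 by auto
  have "(\<Prod>i<Suc n. x i powr (-e i)) = (\<Prod>i<n. x i powr (-e i)) * x n powr (-e n)" by simp
  also have "\<dots> \<le> (\<Prod>i<n. x i powr (-1)) * x n powr (-e n)"
  proof (rule mult_right_mono[OF prod_mono])
    fix i assume "i \<in> {..<n}"
    then have "1 \<le> x i" "1 \<le> e i" using x1 e1 by auto
    then show "0 \<le> x i powr (-e i) \<and> x i powr (-e i) \<le> x i powr (-1)"
      by (intro conjI powr_mono) auto
  qed simp
  also have "x n powr (-e n) = x n powr (- (real n * d)) * x n powr (-(1+d))"
  proof -
    have "e n = 1 + d + real n * d" using d by (simp add: field_simps)
    then have "-e n = - (real n * d) + (-(1+d))" by simp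
    then show ?thesis by (simp only: powr_add[symmetric])
  qed
  also have "x n powr (- (real n * d)) = (\<Prod>i<n. x n powr (-d))"
    using xn powr_power[of "x n" "-d" n] by simp
  also have "(\<Prod>i<n. x i powr (-1)) * ((\<Prod>i<n. x n powr (-d)) * x n powr (-(1+d)))
       = (\<Prod>i<n. x i powr (-1) * x n powr (-d)) * x n powr (-(1+d))"
    by (simp only: prod.distrib mult.assoc)
  also have "\<dots> \<le> (\<Prod>i<n. x i powr (-(1+d))) * x n powr (-(1+d))"
  proof (rule mult_right_mono[OF prod_mono])
    fix i assume "i \<in> {..<n}"
    then have a: "1 \<le> x i" "x i \<le> x n" using x1 xm by auto
    have "x n powr (-d) \<le> x i powr (-d)" using a dpos by (intro powr_mono2') auto
    then have "x i powr (-1) * x n powr (-d) \<le> x i powr (-1) * x i powr (-d)"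
      by (intro mult_left_mono) auto
    also have "\<dots> = x i powr (-(1+d))"
    proof -
      have "-(1+d) = -1 + -d" by simp
      then show ?thesis by (simp only: powr_add)
    qed
    finally show "0 \<le> x i powr (-1) * x n powr (-d) \<and> x i powr (-1) * x n powr (-d) \<le> x i powr (-(1+d))"
      by simp
  qed simp
  also have "\<dots> = (\<Prod>i<Suc n. x i powr (-(1+d)))" by simp
  finally show ?thesis .
qed

definition WT :: "complex list \<Rightarrow> nat list \<Rightarrow> complex" where
  "WT s m = (\<Prod>i<length s. (of_nat (m ! i)) powr (- (s ! i)))"

definition WEAK :: "nat \<Rightarrow> nat list set" where
  "WEAK r = {m. length m = r \<and> sorted_wrt (\<le>) m \<and> (\<forall>x\<in>set m. 0 < x)}"

definition STRICT :: "nat \<Rightarrow> nat list set" where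
  "STRICT r = {m. length m = r \<and> sorted_wrt (<) m \<and> (\<forall>x\<in>set m. 0 < x)}"

lemma chain_summable:
  assumes re: "\<forall>x\<in>set s. 1 \<le> Re x" and last: "s \<noteq> [] \<Longrightarrow> 1 < Re (last s)"
  shows "(\<lambda>m. norm (WT s m)) summable_on WEAK (length s)"
proof (cases s rule: rev_cases)
  case Nil
  then have "WEAK (length s) = {[]}" by (auto simp: WEAK_def)
  then show ?thesis by simp
next
  case (snoc ys y)
  define n where "n = length ys"
  have ls: "length s = Suc n" using snoc n_def by simp
  have sn: "s ! n = last s" using snoc n_def by (simp add: nth_append)
  define d where "d = (Re (s ! n) - 1) / real (Suc n)"
  have en: "1 < Re (s ! n)" using last snoc sn by simp
  have dpos: "1 + d > 1" using en d_def by simp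
  have dom: "(\<lambda>m. prod_list (map (\<lambda>x. real x powr (-(1+d))) m)) summable_on PL (Suc n)"
    using dom_summable[of "1+d" "Suc n"] dpos by simp
  show ?thesis unfolding ls
  proof (rule summable_on_comparison_test[OF summable_on_subset_banach[OF dom]])
    show "WEAK (Suc n) \<subseteq> PL (Suc n)" by (auto simp: WEAK_def PL_def)
  next
    fix m assume m: "m \<in> WEAK (Suc n)"
    then have lm: "length m = Suc n" and so: "sorted_wrt (\<le>) m" and pos: "\<forall>x\<in>set m. 0 < x"
      by (auto simp: WEAK_def)
    have mpos: "\<And>i. i < Suc n \<Longrightarrow> 0 < m ! i" using pos lm by (auto simp: nth_mem)
    have "norm (WT s m) = (\<Prod>i<Suc n. real (m ! i) powr (- Re (s ! i)))"
      unfolding WT_def ls prod_norm[symmetric]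
    proof (rule prod.cong)
      fix i
      have "cmod (of_nat (m ! i) powr - s ! i) = Re (of_nat (m ! i)) powr Re (- s ! i)"
        by (rule norm_powr_real_powr) auto
      then show "cmod (of_nat (m ! i) powr - s ! i) = real (m ! i) powr - Re (s ! i)" by simp
    qed simp
    also have "\<dots> \<le> (\<Prod>i<Suc n. real (m ! i) powr (-(1+d)))"
    proof (rule key_ineq[where e = "\<lambda>i. Re (s ! i)"])
      show "\<forall>i<Suc n. 1 \<le> real (m ! i)" using mpos by (auto simp: Suc_le_eq)
      show "\<forall>i<n. real (m ! i) \<le> real (m ! n)" using so lm by (auto simp: sorted_wrt_iff_nth_less)
      show "\<forall>i<Suc n. 1 \<le> Re (s ! i)" using re ls by (auto simp: nth_mem)
    qed (use d_def en in auto)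
    also have "\<dots> = prod_list (map (\<lambda>x. real x powr (-(1+d))) m)"
      by (simp add: prod.list_conv_set_nth lm atLeast0LessThan)
    finally show "norm (WT s m) \<le> prod_list (map (\<lambda>x. real x powr (-(1+d))) m)" .
  qed simp
qed


definition wf :: "nat \<Rightarrow> nat \<Rightarrow> (int \<Rightarrow> complex) \<Rightarrow> (int \<Rightarrow> nat) \<Rightarrow> complex" where
  "wf p q z f = (\<Prod>k\<in>{- int q..int p}. of_nat (f k) powr (- z k))"

definition CS :: "nat \<Rightarrow> nat \<Rightarrow> nat \<Rightarrow> (int \<Rightarrow> nat) set" where
  "CS p q j = {f. (\<forall>k. (- int q \<le> k \<and> k \<le> int p \<longrightarrow> 0 < f k) \<and> (\<not> (- int q \<le> k \<and> k \<le> int p) \<longrightarrow> f k = 0))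
     \<and> (\<forall>k. - int j \<le> k \<and> k < int p \<longrightarrow> f k \<le> f (k + 1))
     \<and> (\<forall>k. - int q \<le> k \<and> k < - int j \<longrightarrow> f (k + 1) < f k)}"

definition AS :: "nat \<Rightarrow> nat \<Rightarrow> nat \<Rightarrow> (int \<Rightarrow> nat) set" where
  "AS p q j = {f. (\<forall>k. (- int q \<le> k \<and> k \<le> int p \<longrightarrow> 0 < f k) \<and> (\<not> (- int q \<le> k \<and> k \<le> int p) \<longrightarrow> f k = 0))
     \<and> (\<forall>k. - int j \<le> k \<and> k < int p \<longrightarrow> f k \<le> f (k + 1))
     \<and> (\<forall>k. - int q \<le> k \<and> k < - int j - 1 \<longrightarrow> f (k + 1) < f k)}"

lemma AS_split:
  assumes "j < q"
  shows "AS p q j = CS p q j \<union> CS p q (Suc j)" "CS p q j \<inter> CS p q (Suc j) = {}"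
proof -
  show "CS p q j \<inter> CS p q (Suc j) = {}"
  proof (rule ccontr)
    assume "CS p q j \<inter> CS p q (Suc j) \<noteq> {}"
    then obtain f where f: "f \<in> CS p q j" "f \<in> CS p q (Suc j)" by blast
    have a: "\<forall>k. - int q \<le> k \<and> k < - int j \<longrightarrow> f (k + 1) < f k" using f(1) by (simp add: CS_def)
    have b: "\<forall>k. - int (Suc j) \<le> k \<and> k < int p \<longrightarrow> f k \<le> f (k + 1)" using f(2) by (simp add: CS_def)
    have "f (- int j - 1 + 1) < f (- int j - 1)" using a[rule_format, of "- int j - 1"] assms by simp
    moreover have "f (- int j - 1) \<le> f (- int j - 1 + 1)" using b[rule_format, of "- int j - 1"] assms by simp
    ultimately show False by simp
  qed
  show "AS p q j = CS p q j \<union> CS p q (Suc j)"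
  proof (intro equalityI subsetI)
    fix f assume f: "f \<in> AS p q j"
    have s1: "\<forall>k. - int q \<le> k \<and> k < - int j - 1 \<longrightarrow> f (k + 1) < f k" using f by (simp add: AS_def)
    show "f \<in> CS p q j \<union> CS p q (Suc j)"
    proof (cases "f (- int j - 1 + 1) < f (- int j - 1)")
      case True
      have "\<forall>k. - int q \<le> k \<and> k < - int j \<longrightarrow> f (k + 1) < f k"
      proof (intro allI impI)
        fix k assume k: "- int q \<le> k \<and> k < - int j"
        then have "k < - int j - 1 \<or> k = - int j - 1" by linarith
        then show "f (k + 1) < f k" using s1 k True by auto
      qed
      then have "f \<in> CS p q j" using f unfolding AS_def CS_def by auto
      then show ?thesis by simp
    next
      case False
      have "\<forall>k. - int (Suc j) \<le> k \<and> k < int p \<longrightarrow> f k \<le> f (k + 1)"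
      proof (intro allI impI)
        fix k assume k: "- int (Suc j) \<le> k \<and> k < int p"
        then have "- int j \<le> k \<or> k = - int j - 1" by linarith
        then show "f k \<le> f (k + 1)" using f k False unfolding AS_def by auto
      qed
      then have "f \<in> CS p q (Suc j)" using f unfolding AS_def CS_def by auto
      then show ?thesis by simp
    qed
  next
    fix f assume "f \<in> CS p q j \<union> CS p q (Suc j)"
    then show "f \<in> AS p q j" unfolding AS_def CS_def by auto
  qed
qed

lemma AS_last: "AS p q q = CS p q q"
  unfolding AS_def CS_def by auto


definition toF :: "nat \<Rightarrow> nat \<Rightarrow> nat \<Rightarrow> nat list \<Rightarrow> nat list \<Rightarrow> int \<Rightarrow> nat" where
  "toF p q j a b = (\<lambda>k. if - int j \<le> k \<and> k \<le> int p then a ! nat (k + int j)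
      else if - int q \<le> k \<and> k < - int j then b ! nat (- k - int j - 1) else 0)"

lemma len1: "length (map f [- int j..int p]) = Suc (j + p)" by simp
lemma len2: "j \<le> q \<Longrightarrow> length (map f [int j + 1..int q]) = q - j" by simp

lemma tof_in:
  assumes jq: "j \<le> q" and a: "a \<in> WEAK (Suc (j + p))" and b: "b \<in> STRICT (q - j)"
  shows "toF p q j a b \<in> AS p q j"
proof -
  from a have la: "length a = Suc (j + p)" and sa: "sorted_wrt (\<le>) a" and pa: "\<forall>x\<in>set a. 0 < x"
    by (auto simp: WEAK_def)
  from b have lb: "length b = q - j" and sb: "sorted_wrt (<) b" and pb: "\<forall>x\<in>set b. 0 < x"
    by (auto simp: STRICT_def)
  let ?f = "toF p q j a b"
  have P: "(- int q \<le> k \<and> k \<le> int p \<longrightarrow> 0 < ?f k) \<and> (\<not> (- int q \<le> k \<and> k \<le> int p) \<longrightarrow> ?f k = 0)" for k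
  proof (intro conjI impI)
    assume k: "- int q \<le> k \<and> k \<le> int p"
    show "0 < ?f k"
    proof (cases "- int j \<le> k")
      case True
      then have "nat (k + int j) < length a" using la k by linarith
      then show ?thesis using pa True k unfolding toF_def by (auto simp: nth_mem)
    next
      case False
      then have "nat (- k - int j - 1) < length b" using lb k jq by linarith
      then show ?thesis using pb False k unfolding toF_def by (auto simp: nth_mem)
    qed
  next
    assume "\<not> (- int q \<le> k \<and> k \<le> int p)"
    then show "?f k = 0" using jq unfolding toF_def by auto
  qed
  have W: "?f k \<le> ?f (k + 1)" if k: "- int j \<le> k" "k < int p" for k
  proof -
    have "a ! nat (k + int j) \<le> a ! nat (k + 1 + int j)"
      using sa la k by (auto simp: sorted_wrt_iff_nth_less intro!: order.strict_implies_order) (metis le_less sorted_wrt_iff_nth_less)?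
    then show ?thesis using k unfolding toF_def by auto
  qed
  have S: "?f (k + 1) < ?f k" if k: "- int q \<le> k" "k < - int j - 1" for k
  proof -
    have "b ! nat (- (k + 1) - int j - 1) < b ! nat (- k - int j - 1)"
      using sb lb k by (subst (asm) sorted_wrt_iff_nth_less) (auto dest!: spec[of _ "nat (- (k + 1) - int j - 1)"] spec[of _ "nat (- k - int j - 1)"])
    then show ?thesis using k unfolding toF_def by auto
  qed
  show ?thesis unfolding AS_def using P W S by blast
qed

lemma fromf_in:
  assumes jq: "j \<le> q" and f: "f \<in> AS p q j"
  shows "map f [- int j..int p] \<in> WEAK (Suc (j + p))"
    and "map (\<lambda>k. f (- k)) [int j + 1..int q] \<in> STRICT (q - j)"
proof -
  from f have P: "\<And>k. - int q \<le> k \<Longrightarrow> k \<le> int p \<Longrightarrow> 0 < f k"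
    and W: "\<And>k. - int j \<le> k \<Longrightarrow> k < int p \<Longrightarrow> f k \<le> f (k + 1)"
    and S: "\<And>k. - int q \<le> k \<Longrightarrow> k < - int j - 1 \<Longrightarrow> f (k + 1) < f k"
    by (auto simp: AS_def)
  show "map f [- int j..int p] \<in> WEAK (Suc (j + p))"
    unfolding WEAK_def
  proof (intro CollectI conjI)
    show "length (map f [- int j..int p]) = Suc (j + p)" by simp
    show "sorted_wrt (\<le>) (map f [- int j..int p])"
    proof (subst sorted_wrt_iff_nth_Suc_transp)
      show "transp ((\<le>) :: nat \<Rightarrow> nat \<Rightarrow> bool)" by (auto simp: transp_def)
      show "\<forall>i. Suc i < length (map f [- int j..int p]) \<longrightarrow> map f [- int j..int p] ! i \<le> map f [- int j..int p] ! Suc i"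
      proof (intro allI impI)
        fix i assume i: "Suc i < length (map f [- int j..int p])"
        then have "Suc i < Suc (j + p)" by simp
        then show "map f [- int j..int p] ! i \<le> map f [- int j..int p] ! Suc i"
          using W[of "- int j + int i"] by (simp add: algebra_simps)
      qed
    qed
    show "\<forall>x\<in>set (map f [- int j..int p]). 0 < x" using P jq by auto
  qed
  show "map (\<lambda>k. f (- k)) [int j + 1..int q] \<in> STRICT (q - j)"
    unfolding STRICT_def
  proof (intro CollectI conjI)
    show "length (map (\<lambda>k. f (- k)) [int j + 1..int q]) = q - j" using jq by simp
    show "sorted_wrt (<) (map (\<lambda>k. f (- k)) [int j + 1..int q])"
    proof (subst sorted_wrt_iff_nth_Suc_transp)
      show "transp ((<) :: nat \<Rightarrow> nat \<Rightarrow> bool)" by (auto simp: transp_def)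
      show "\<forall>i. Suc i < length (map (\<lambda>k. f (- k)) [int j + 1..int q]) \<longrightarrow> map (\<lambda>k. f (- k)) [int j + 1..int q] ! i < map (\<lambda>k. f (- k)) [int j + 1..int q] ! Suc i"
      proof (intro allI impI)
        fix i assume i: "Suc i < length (map (\<lambda>k. f (- k)) [int j + 1..int q])"
        then have i2: "Suc i < q - j" by simp
        have e1: "[int j + 1..int q] ! i = int j + 1 + int i" using i2 by (intro nth_upto) linarith
        have e2: "[int j + 1..int q] ! Suc i = int j + 1 + int (Suc i)" using i2 by (intro nth_upto) linarith
        show "map (\<lambda>k. f (- k)) [int j + 1..int q] ! i < map (\<lambda>k. f (- k)) [int j + 1..int q] ! Suc i"
          using S[of "- (int j + 1 + int (Suc i))"] i2 e1 e2 by (simp add: algebra_simps)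
      qed
    qed
    show "\<forall>x\<in>set (map (\<lambda>k. f (- k)) [int j + 1..int q]). 0 < x" using P jq by auto
  qed
qed

lemma inv1:
  assumes jq: "j \<le> q" and la: "length a = Suc (j + p)" and lb: "length b = q - j"
  shows "map (toF p q j a b) [- int j..int p] = a"
    and "map (\<lambda>k. toF p q j a b (- k)) [int j + 1..int q] = b"
proof -
  show "map (toF p q j a b) [- int j..int p] = a"
  proof (rule nth_equalityI)
    show "length (map (toF p q j a b) [- int j..int p]) = length a" using la by simp
    fix i assume "i < length (map (toF p q j a b) [- int j..int p])"
    then have i: "i < Suc (j + p)" by simp
    have e: "[- int j..int p] ! i = - int j + int i" using i by (intro nth_upto) linarith
    show "map (toF p q j a b) [- int j..int p] ! i = a ! i"
      using i e unfolding toF_def by simp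
  qed
  show "map (\<lambda>k. toF p q j a b (- k)) [int j + 1..int q] = b"
  proof (rule nth_equalityI)
    show "length (map (\<lambda>k. toF p q j a b (- k)) [int j + 1..int q]) = length b" using lb jq by simp
    fix i assume "i < length (map (\<lambda>k. toF p q j a b (- k)) [int j + 1..int q])"
    then have i: "i < q - j" by simp
    have e: "[int j + 1..int q] ! i = int j + 1 + int i" using i by (intro nth_upto) linarith
    have n: "nat (int j + 1 + int i - int j - 1) = i" by simp
    show "map (\<lambda>k. toF p q j a b (- k)) [int j + 1..int q] ! i = b ! i"
      using i e jq unfolding toF_def by (simp add: n)
  qed
qed

lemma inv2:
  assumes jq: "j \<le> q" and f: "f \<in> AS p q j"
  shows "toF p q j (map f [- int j..int p]) (map (\<lambda>k. f (- k)) [int j + 1..int q]) = f"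
proof
  fix k
  have Z: "\<not> (- int q \<le> k \<and> k \<le> int p) \<Longrightarrow> f k = 0" using f by (auto simp: AS_def)
  show "toF p q j (map f [- int j..int p]) (map (\<lambda>k. f (- k)) [int j + 1..int q]) k = f k"
  proof (cases "- int j \<le> k \<and> k \<le> int p")
    case True
    have e: "[- int j..int p] ! nat (k + int j) = - int j + int (nat (k + int j))" using True by (intro nth_upto) linarith
    show ?thesis using True e unfolding toF_def by simp
  next
    case F1: False
    show ?thesis
    proof (cases "- int q \<le> k \<and> k < - int j")
      case True
      have e: "[int j + 1..int q] ! nat (- k - int j - 1) = int j + 1 + int (nat (- k - int j - 1))"
        using True by (intro nth_upto) linarith
      have l: "nat (- k - int j - 1) < length [int j + 1..int q]" using True by simp
      show ?thesis using True F1 e l unfolding toF_def by simp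
    next
      case False
      then show ?thesis using F1 Z jq unfolding toF_def by auto
    qed
  qed
qed

lemma weight_split:
  assumes jq: "j \<le> q" and la: "length a = Suc (j + p)" and lb: "length b = q - j"
  shows "wf p q z (toF p q j a b) = WT (map z [- int j..int p]) a * WT (map (\<lambda>k. z (- k)) [int j + 1..int q]) b"
proof -
  let ?F = "toF p q j a b"
  let ?h = "\<lambda>k. (of_nat (?F k) :: complex) powr (- z k)"
  have 1: "WT (map z [- int j..int p]) a = prod ?h {- int j..int p}"
    unfolding WT_def
  proof (rule prod.reindex_bij_witness[of _ "\<lambda>k. nat (k + int j)" "\<lambda>i. - int j + int i"])
    fix i assume "i \<in> {..<length (map z [- int j..int p])}"
    then have i: "i < Suc (j + p)" by simp
    have e: "[- int j..int p] ! i = - int j + int i" using i by (intro nth_upto) linarith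
    show "nat (- int j + int i + int j) = i" by simp
    show "- int j + int i \<in> {- int j..int p}" using i by simp
    show "?h (- int j + int i) = of_nat (a ! i) powr - map z [- int j..int p] ! i"
      using i e unfolding toF_def by simp
  next
    fix k assume "k \<in> {- int j..int p}"
    then show "- int j + int (nat (k + int j)) = k" "nat (k + int j) \<in> {..<length (map z [- int j..int p])}"
      by auto
  qed
  have 2: "WT (map (\<lambda>k. z (- k)) [int j + 1..int q]) b = prod ?h {- int q..- int j - 1}"
    unfolding WT_def
  proof (rule prod.reindex_bij_witness[of _ "\<lambda>k. nat (- k - int j - 1)" "\<lambda>i. - (int j + 1 + int i)"])
    fix i assume "i \<in> {..<length (map (\<lambda>k. z (- k)) [int j + 1..int q])}"
    then have i: "i < q - j" by simp
    have e: "[int j + 1..int q] ! i = int j + 1 + int i" using i by (intro nth_upto) linarith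
    show "nat (- (- (int j + 1 + int i)) - int j - 1) = i" by simp
    show "- (int j + 1 + int i) \<in> {- int q..- int j - 1}" using i by simp
    have n: "nat (int j + 1 + int i - int j - 1) = i" by simp
    show "?h (- (int j + 1 + int i)) = of_nat (b ! i) powr - map (\<lambda>k. z (- k)) [int j + 1..int q] ! i"
      using i e jq unfolding toF_def by (simp add: n)
  next
    fix k assume "k \<in> {- int q..- int j - 1}"
    then show "- (int j + 1 + int (nat (- k - int j - 1))) = k"
      "nat (- k - int j - 1) \<in> {..<length (map (\<lambda>k. z (- k)) [int j + 1..int q])}"
      by auto
  qed
  have U: "{- int q..int p} = {- int q..- int j - 1} \<union> {- int j..int p}" using jq by auto
  have "wf p q z ?F = prod ?h {- int q..- int j - 1} * prod ?h {- int j..int p}"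
    unfolding wf_def U by (rule prod.union_disjoint) auto
  then show ?thesis using 1 2 by simp
qed

lemma mzeta_WT: "mzeta s = infsum (WT s) (STRICT (length s))"
  unfolding mzeta_def WT_def STRICT_def by simp
lemma mzeta_star_WT: "mzeta_star s = infsum (WT s) (WEAK (length s))"
  unfolding mzeta_star_def WT_def WEAK_def by simp

lemma term_has_sum:
  assumes jq: "j \<le> q" and re: "\<forall>k. - int q \<le> k \<and> k \<le> int p \<longrightarrow> 1 \<le> Re (z k)"
    and zp: "1 < Re (z (int p))" and zq: "1 < Re (z (- int q))"
  shows "(wf p q z has_sum (mzeta_star (map z [- int j..int p]) * mzeta (map (\<lambda>k. z (- k)) [int j + 1..int q]))) (AS p q j)"
proof -
  define L1 where "L1 = map z [- int j..int p]"
  define L2 where "L2 = map (\<lambda>k. z (- k)) [int j + 1..int q]"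
  have l1: "length L1 = Suc (j + p)" unfolding L1_def by simp
  have l2: "length L2 = q - j" unfolding L2_def using jq by simp
  have n1: "(\<lambda>m. norm (WT L1 m)) summable_on WEAK (Suc (j + p))"
  proof -
    have "(\<lambda>m. norm (WT L1 m)) summable_on WEAK (length L1)"
    proof (rule chain_summable)
      show "\<forall>x\<in>set L1. 1 \<le> Re x" using re jq unfolding L1_def by auto
      have "last L1 = L1 ! (length L1 - 1)" using l1 by (intro last_conv_nth) auto
      also have "\<dots> = z (int p)" unfolding L1_def by (subst nth_map) (auto simp: nth_upto)
      finally show "L1 \<noteq> [] \<Longrightarrow> 1 < Re (last L1)" using zp by simp
    qed
    then show ?thesis using l1 by simp
  qed
  have n2: "(\<lambda>m. norm (WT L2 m)) summable_on STRICT (q - j)"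
  proof -
    have "(\<lambda>m. norm (WT L2 m)) summable_on WEAK (length L2)"
    proof (rule chain_summable)
      show "\<forall>x\<in>set L2. 1 \<le> Re x" using re jq unfolding L2_def by auto
      assume ne: "L2 \<noteq> []"
      then have "length L2 > 0" by simp
      have "last L2 = L2 ! (length L2 - 1)" using ne by (intro last_conv_nth) auto
      also have "\<dots> = z (- int q)" unfolding L2_def using ne l2 \<open>length L2 > 0\<close>
        by (subst nth_map) (auto simp: nth_upto L2_def)
      finally show "1 < Re (last L2)" using zq by simp
    qed
    moreover have "STRICT (q - j) \<subseteq> WEAK (length L2)"
      using l2 by (auto simp: STRICT_def WEAK_def elim: sorted_wrt_mono_rel[rotated])
    ultimately show ?thesis using summable_on_subset_banach by blast
  qed
  have P1: "(\<lambda>xy. norm (case xy of (x,y) \<Rightarrow> WT L1 x * WT L2 y)) summable_on WEAK (Suc (j + p)) \<times> STRICT (q - j)"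
    by (rule prod_infsum_mult(1)[OF n1 n2])
  have P2: "infsum (WT L1) (WEAK (Suc (j + p))) * infsum (WT L2) (STRICT (q - j)) = infsum (\<lambda>(x,y). WT L1 x * WT L2 y) (WEAK (Suc (j + p)) \<times> STRICT (q - j))"
    by (rule prod_infsum_mult(2)[OF n1 n2])
  have "(\<lambda>xy. case xy of (x,y) \<Rightarrow> WT L1 x * WT L2 y) summable_on WEAK (Suc (j + p)) \<times> STRICT (q - j)"
    using abs_summable_summable[OF P1] .
  then have H: "((\<lambda>(x,y). WT L1 x * WT L2 y) has_sum (mzeta_star L1 * mzeta L2)) (WEAK (Suc (j + p)) \<times> STRICT (q - j))"
    using P2 l1 l2 by (simp add: mzeta_WT mzeta_star_WT has_sum_infsum)
  have "((\<lambda>(x,y). WT L1 x * WT L2 y) has_sum (mzeta_star L1 * mzeta L2)) (WEAK (Suc (j + p)) \<times> STRICT (q - j))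
     = (wf p q z has_sum (mzeta_star L1 * mzeta L2)) (AS p q j)"
  proof (rule has_sum_reindex_bij_witness[of _ "\<lambda>f. (map f [- int j..int p], map (\<lambda>k. f (- k)) [int j + 1..int q])"
        "\<lambda>(a,b). toF p q j a b"])
    fix ab assume ab: "ab \<in> WEAK (Suc (j + p)) \<times> STRICT (q - j)"
    obtain a b where abe: "ab = (a, b)" by (cases ab)
    have a: "a \<in> WEAK (Suc (j + p))" and b: "b \<in> STRICT (q - j)" using ab abe by auto
    have la: "length a = Suc (j + p)" using a by (simp add: WEAK_def)
    have lb: "length b = q - j" using b by (simp add: STRICT_def)
    show "(\<lambda>f. (map f [- int j..int p], map (\<lambda>k. f (- k)) [int j + 1..int q])) ((\<lambda>(a,b). toF p q j a b) ab) = ab"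
      using inv1[OF jq la lb] abe by simp
    show "(\<lambda>(a,b). toF p q j a b) ab \<in> AS p q j" using tof_in[OF jq a b] abe by simp
    show "wf p q z ((\<lambda>(a,b). toF p q j a b) ab) = (\<lambda>(x,y). WT L1 x * WT L2 y) ab"
      using weight_split[OF jq la lb, of z] abe L1_def L2_def by simp
  next
    fix f assume f: "f \<in> AS p q j"
    show "(\<lambda>(a,b). toF p q j a b) (map f [- int j..int p], map (\<lambda>k. f (- k)) [int j + 1..int q]) = f"
      using inv2[OF jq f] by simp
    show "(map f [- int j..int p], map (\<lambda>k. f (- k)) [int j + 1..int q]) \<in> WEAK (Suc (j + p)) \<times> STRICT (q - j)"
      using fromf_in[OF jq f] by simp
  qed simp
  with H show ?thesis unfolding L1_def L2_def by simp
qed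


lemma young_hook: "(i, j) \<in> young_diagram (hook p q) \<longleftrightarrow>
   (i = 1 \<and> 1 \<le> j \<and> j \<le> Suc p) \<or> (j = 1 \<and> 2 \<le> i \<and> i \<le> Suc q)"
proof (cases i)
  case 0 then show ?thesis by (simp add: young_diagram_def hook_def)
next
  case (Suc i')
  then show ?thesis by (cases i') (auto simp: young_diagram_def hook_def nth_Cons')
qed

definition fromM :: "nat \<Rightarrow> nat \<Rightarrow> (nat \<times> nat \<Rightarrow> nat) \<Rightarrow> int \<Rightarrow> nat" where
  "fromM p q M = (\<lambda>k. if 0 \<le> k \<and> k \<le> int p then M (1, nat k + 1)
      else if - int q \<le> k \<and> k < 0 then M (nat (1 - k), 1) else 0)"

definition toM :: "nat \<Rightarrow> nat \<Rightarrow> (int \<Rightarrow> nat) \<Rightarrow> nat \<times> nat \<Rightarrow> nat" where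
  "toM p q f = (\<lambda>(i, j). if (i, j) \<in> young_diagram (hook p q) then f (int j - int i) else 0)"

lemma SSYT_hook_D:
  assumes "M \<in> SSYT (hook p q)"
  shows "\<And>i j. \<not> ((i = 1 \<and> 1 \<le> j \<and> j \<le> Suc p) \<or> (j = 1 \<and> 2 \<le> i \<and> i \<le> Suc q)) \<Longrightarrow> M (i, j) = 0"
    and "\<And>j. 1 \<le> j \<Longrightarrow> j \<le> Suc p \<Longrightarrow> 0 < M (1, j)"
    and "\<And>i. 1 \<le> i \<Longrightarrow> i \<le> Suc q \<Longrightarrow> 0 < M (i, 1)"
    and "\<And>j. 1 \<le> j \<Longrightarrow> j \<le> p \<Longrightarrow> M (1, j) \<le> M (1, Suc j)"
    and "\<And>i. 1 \<le> i \<Longrightarrow> i \<le> q \<Longrightarrow> M (i, 1) < M (Suc i, 1)"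
proof -
  have A: "\<forall>b. b \<notin> young_diagram (hook p q) \<longrightarrow> M b = 0"
    and B: "\<forall>b\<in>young_diagram (hook p q). 0 < M b"
    and R: "\<forall>i j. (i, j) \<in> young_diagram (hook p q) \<and> (i, Suc j) \<in> young_diagram (hook p q) \<longrightarrow> M (i, j) \<le> M (i, Suc j)"
    and C: "\<forall>i j. (i, j) \<in> young_diagram (hook p q) \<and> (Suc i, j) \<in> young_diagram (hook p q) \<longrightarrow> M (i, j) < M (Suc i, j)"
    using assms unfolding SSYT_def by blast+
  show "\<And>i j. \<not> ((i = 1 \<and> 1 \<le> j \<and> j \<le> Suc p) \<or> (j = 1 \<and> 2 \<le> i \<and> i \<le> Suc q)) \<Longrightarrow> M (i, j) = 0"
    using A by (simp add: young_hook)
  show "\<And>j. 1 \<le> j \<Longrightarrow> j \<le> Suc p \<Longrightarrow> 0 < M (1, j)" using B by (simp add: young_hook)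
  show "\<And>i. 1 \<le> i \<Longrightarrow> i \<le> Suc q \<Longrightarrow> 0 < M (i, 1)"
  proof -
    fix i assume "1 \<le> i" "i \<le> Suc q"
    then have "(i, 1) \<in> young_diagram (hook p q)" by (auto simp: young_hook)
    then show "0 < M (i, 1)" using B by blast
  qed
  show "\<And>j. 1 \<le> j \<Longrightarrow> j \<le> p \<Longrightarrow> M (1, j) \<le> M (1, Suc j)" using R by (simp add: young_hook)
  show "\<And>i. 1 \<le> i \<Longrightarrow> i \<le> q \<Longrightarrow> M (i, 1) < M (Suc i, 1)"
  proof -
    fix i assume "1 \<le> i" "i \<le> q"
    then have "(i, 1) \<in> young_diagram (hook p q)" "(Suc i, 1) \<in> young_diagram (hook p q)" by (auto simp: young_hook)
    then show "M (i, 1) < M (Suc i, 1)" using C by blast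
  qed
qed

lemma fromM_in:
  assumes M: "M \<in> SSYT (hook p q)"
  shows "fromM p q M \<in> CS p q 0"
proof -
  note D = SSYT_hook_D[OF M]
  let ?f = "fromM p q M"
  have P: "(- int q \<le> k \<and> k \<le> int p \<longrightarrow> 0 < ?f k) \<and> (\<not> (- int q \<le> k \<and> k \<le> int p) \<longrightarrow> ?f k = 0)" for k
    unfolding fromM_def using D(2)[of "nat k + 1"] D(3)[of "nat (1 - k)"] by auto
  have W: "?f k \<le> ?f (k + 1)" if "0 \<le> k" "k < int p" for k
    using that D(4)[of "nat k + 1"] unfolding fromM_def by (auto simp: nat_add_distrib)
  have S: "?f (k + 1) < ?f k" if "- int q \<le> k" "k < 0" for k
  proof (cases "k = -1")
    case True
    then show ?thesis using D(5)[of 1] that unfolding fromM_def by (auto simp: numeral_2_eq_2)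
  next
    case False
    then have "k < -1" using that by simp
    then have "M (nat (- k), 1) < M (Suc (nat (- k)), 1)" using D(5)[of "nat (- k)"] that by auto
    moreover have "nat (1 - k) = Suc (nat (- k))" "nat (1 - (k + 1)) = nat (- k)" using \<open>k < -1\<close> by auto
    ultimately show ?thesis using that \<open>k < -1\<close> unfolding fromM_def by auto
  qed
  show ?thesis unfolding CS_def using P W S by auto
qed

lemma toM_in:
  assumes f: "f \<in> CS p q 0"
  shows "toM p q f \<in> SSYT (hook p q)"
proof -
  from f have P: "\<And>k. - int q \<le> k \<Longrightarrow> k \<le> int p \<Longrightarrow> 0 < f k"
    and W: "\<And>k. 0 \<le> k \<Longrightarrow> k < int p \<Longrightarrow> f k \<le> f (k + 1)"
    and S: "\<And>k. - int q \<le> k \<Longrightarrow> k < 0 \<Longrightarrow> f (k + 1) < f k"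
    by (auto simp: CS_def)
  show ?thesis unfolding SSYT_def
  proof (intro CollectI conjI allI impI ballI)
    fix b assume "b \<notin> young_diagram (hook p q)"
    then show "toM p q f b = 0" unfolding toM_def by (auto split: prod.splits)
  next
    fix b assume b: "b \<in> young_diagram (hook p q)"
    obtain i j where "b = (i, j)" by (cases b)
    then show "0 < toM p q f b" using b P unfolding toM_def by (auto simp: young_hook)
  next
    fix i j assume a: "(i, j) \<in> young_diagram (hook p q) \<and> (i, Suc j) \<in> young_diagram (hook p q)"
    then have "i = 1" "1 \<le> j" "j \<le> p" by (auto simp: young_hook)
    then show "toM p q f (i, j) \<le> toM p q f (i, Suc j)"
      using a W[of "int j - 1"] unfolding toM_def by auto
  next
    fix i j assume a: "(i, j) \<in> young_diagram (hook p q) \<and> (Suc i, j) \<in> young_diagram (hook p q)"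
    then have "j = 1" "1 \<le> i" "i \<le> q" by (auto simp: young_hook)
    then show "toM p q f (i, j) < toM p q f (Suc i, j)"
      using a S[of "- int i"] unfolding toM_def by (auto simp: algebra_simps)
  qed
qed

lemma toM_fromM:
  assumes M: "M \<in> SSYT (hook p q)"
  shows "toM p q (fromM p q M) = M"
proof
  fix b :: "nat \<times> nat"
  obtain i j where b: "b = (i, j)" by (cases b)
  note D = SSYT_hook_D[OF M]
  show "toM p q (fromM p q M) b = M b"
  proof (cases "(i = 1 \<and> 1 \<le> j \<and> j \<le> Suc p) \<or> (j = 1 \<and> 2 \<le> i \<and> i \<le> Suc q)")
    case True
    then show ?thesis unfolding b toM_def fromM_def young_hook
      by (auto simp: nat_diff_distrib)
  next
    case False
    have nY: "(i, j) \<notin> young_diagram (hook p q)" using False by (simp add: young_hook)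
    show ?thesis unfolding b toM_def using D(1)[OF False] nY by simp
  qed
qed

lemma fromM_toM:
  assumes f: "f \<in> CS p q 0"
  shows "fromM p q (toM p q f) = f"
proof
  fix k
  have Z: "\<not> (- int q \<le> k \<and> k \<le> int p) \<Longrightarrow> f k = 0" using f by (auto simp: CS_def)
  show "fromM p q (toM p q f) k = f k"
  proof (cases "0 \<le> k \<and> k \<le> int p")
    case True
    then have "toM p q f (1, nat k + 1) = f k" unfolding toM_def young_hook by auto
    then show ?thesis using True unfolding fromM_def by simp
  next
    case F: False
    show ?thesis
    proof (cases "- int q \<le> k \<and> k < 0")
      case True
      then have "toM p q f (nat (1 - k), 1) = f k" unfolding toM_def young_hook by auto
      then show ?thesis using True F unfolding fromM_def by simp
    next
      case False
      then show ?thesis using F Z unfolding fromM_def by auto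
    qed
  qed
qed

lemma weight_M:
  assumes M: "M \<in> SSYT (hook p q)"
  shows "wf p q z (fromM p q M) = (\<Prod>b\<in>young_diagram (hook p q). (of_nat (M b)) powr (- (\<lambda>(i, j). z (int j - int i)) b))"
  unfolding wf_def
proof (rule prod.reindex_bij_witness[of _ "\<lambda>(i, j). int j - int i" "\<lambda>k. if 0 \<le> k then (1, nat k + 1) else (nat (1 - k), 1)"])
  fix b assume b: "b \<in> young_diagram (hook p q)"
  obtain i j where be: "b = (i, j)" by (cases b)
  show "(if 0 \<le> (case b of (i, j) \<Rightarrow> int j - int i) then (1, nat (case b of (i, j) \<Rightarrow> int j - int i) + 1)
          else (nat (1 - (case b of (i, j) \<Rightarrow> int j - int i)), 1)) = b"
    using b unfolding be young_hook by auto
  show "(case b of (i, j) \<Rightarrow> int j - int i) \<in> {- int q..int p}"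
    using b unfolding be young_hook by auto
next
  fix k assume k: "k \<in> {- int q..int p}"
  show "(case if 0 \<le> k then (1, nat k + 1) else (nat (1 - k), 1) of (i, j) \<Rightarrow> int j - int i) = k"
    by auto
  show "(if 0 \<le> k then (1, nat k + 1) else (nat (1 - k), 1)) \<in> young_diagram (hook p q)"
    using k by (auto simp: young_hook)
  show "of_nat (M (if 0 \<le> k then (1, nat k + 1) else (nat (1 - k), 1))) powr
        - (case (if 0 \<le> k then (1, nat k + 1) else (nat (1 - k), 1)) of (i, j) \<Rightarrow> z (int j - int i)) =
        of_nat (fromM p q M k) powr - z k"
    using k unfolding fromM_def by auto
qed

lemma schur_CS:
  "schur_zeta (hook p q) (\<lambda>(i, j). z (int j - int i)) = infsum (wf p q z) (CS p q 0)"
  unfolding schur_zeta_def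
proof (rule infsum_reindex_bij_witness[of _ "toM p q" "fromM p q"])
  fix M assume "M \<in> SSYT (hook p q)"
  then show "toM p q (fromM p q M) = M" "fromM p q M \<in> CS p q 0"
    "wf p q z (fromM p q M) = (\<Prod>b\<in>young_diagram (hook p q). (of_nat (M b)) powr (- (\<lambda>(i, j). z (int j - int i)) b))"
    using toM_fromM fromM_in weight_M by auto
next
  fix f assume "f \<in> CS p q 0"
  then show "fromM p q (toM p q f) = f" "toM p q f \<in> SSYT (hook p q)"
    using fromM_toM toM_in by auto
qed


lemma tele_aux: "(\<Sum>j<n. (-1) ^ j * (c j + c (Suc j))) = c 0 - (-1) ^ n * (c n :: complex)"
  by (induction n) (auto simp: algebra_simps)

lemma tele:
  assumes "\<forall>j<q. T j = c j + c (Suc j)" "T q = (c q :: complex)"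
  shows "(\<Sum>j = 0..q. (-1) ^ j * T j) = c 0"
proof -
  have "(\<Sum>j = 0..q. (-1) ^ j * T j) = (\<Sum>j<q. (-1) ^ j * T j) + (-1) ^ q * T q"
    by (simp add: atLeast0AtMost lessThan_Suc_atMost[symmetric])
  also have "(\<Sum>j<q. (-1) ^ j * T j) = (\<Sum>j<q. (-1) ^ j * (c j + c (Suc j)))"
    using assms(1) by (intro sum.cong) auto
  finally show ?thesis using tele_aux[of c q] assms(2) by simp
qed

lemma CS_sub_AS: "CS p q j \<subseteq> AS p q j"
  unfolding CS_def AS_def by auto

theorem theorem3p1:
  fixes p q :: nat and z :: "int \<Rightarrow> complex"
  assumes "\<forall>k. - int q \<le> k \<and> k \<le> int p \<longrightarrow> 1 \<le> Re (z k)"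
    and "1 < Re (z (int p))"
    and "1 < Re (z (- int q))"
  shows "schur_zeta (hook p q) (\<lambda>(i, j). z (int j - int i)) =
    (\<Sum>j = 0..q. (-1) ^ j * mzeta_star (map z [- int j..int p])
                  * mzeta (map (\<lambda>k. z (- k)) [int j + 1..int q]))"
proof -
  define T where "T j = mzeta_star (map z [- int j..int p]) * mzeta (map (\<lambda>k. z (- k)) [int j + 1..int q])" for j
  define c where "c j = infsum (wf p q z) (CS p q j)" for j
  have H: "j \<le> q \<Longrightarrow> (wf p q z has_sum T j) (AS p q j)" for j
    unfolding T_def using term_has_sum assms by blast
  have Tj: "\<forall>j<q. T j = c j + c (Suc j)"
  proof (intro allI impI)
    fix j assume j: "j < q"
    have h: "(wf p q z has_sum T j) (AS p q j)" using H j by simp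
    then have sA: "wf p q z summable_on AS p q j" by (rule has_sum_imp_summable)
    have s1: "wf p q z summable_on CS p q j" using sA AS_split(1)[OF j] summable_on_subset_banach by blast
    have s2: "wf p q z summable_on CS p q (Suc j)" using sA AS_split(1)[OF j] summable_on_subset_banach by blast
    have "T j = infsum (wf p q z) (AS p q j)" using h by (simp add: infsumI)
    also have "\<dots> = c j + c (Suc j)" unfolding c_def AS_split(1)[OF j]
      by (rule infsum_Un_disjoint[OF s1 s2 AS_split(2)[OF j]])
    finally show "T j = c j + c (Suc j)" .
  qed
  have Tq: "T q = c q"
    using H[of q] AS_last[of p q] unfolding c_def by (simp add: infsumI)
  have "(\<Sum>j = 0..q. (-1) ^ j * T j) = c 0" by (rule tele[OF Tj Tq])
  then show ?thesis unfolding T_def c_def using schur_CS[of p q z] by (simp add: mult.assoc)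
qed

end
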